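(* Let $U,V\subseteq M$ be open, let $\Psi:U\to V$ be a diffeomorphism with $\Psi^*t=t$, and let $g$ be a slice-compatible Lorentzian metric on $V$ with shift $X$. For a tensor field $T$ on $V$ define $B=\mathcal S(T;X)$ and $\hat B=\mathcal S(\Psi^*T;\hat X)$, where $\hat X$ is the shift of the slice-compatible Lorentzian metric $\Psi^*g$. Then $\hat B=j_*\Psi^*B$. If additionally $\Psi$ is the identity on $\Sigma_{t_0}\cap U$ for some $t_0$, then on $\Sigma_{t_0}\cap U$ we have $\hat B=B$ and $\mathcal L_S\hat B=\mathcal L_SB$ for all spatial vector fields $S$.
   Context: $M=\Sigma\times I$, where $\Sigma\subseteq\mathbb R^n$ is open with coordinates $x^1,\dots,x^n$ and $I\subseteq\mathbb R$ is an open interval with coordinate $t$; $\Sigma_t=\Sigma\times\{t\}$; all fields smooth. A tensor is spatial if it vanishes whenever one of its arguments is $dt$ or $\partial_t$. The projection $j_*$: $j_*dt=0$, $j_*dx^i=dx^i$, $j_*\partial_t=0$, $j_*\partial_{x^i}=\partial_{x^i}$, $j_*T(\cdot,\dots,\cdot)=T(j_*\cdot,\dots,j_*\cdot)$. $\Psi^*$ acts on vectors by $\Psi^*Y=(\Psi^{-1})_*Y$. A Lorentzian metric $g$ is slice compatible if its restriction to each $\Sigma_t$ is Riemannian; its unit normal $\nu$ satisfies $\nu(dt)>0$, $g(\nu,\nu)=-1$, $j_*g(\nu,\cdot)=0$; writing $\partial_t=N\nu+X$ with $X$ spatial defines the shift $X$ (and lapse $N$). Decomposition of tensors: for a spatial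 vector field $X$, let $\mathcal P_X(a\partial_t+W)=aX+W$ ($W$ spatial) and $\mathcal P_X^*$ its adjoint on 1-forms, $(\mathcal P_X^*\omega)(Z)=\omega(\mathcal P_XZ)$. For a tensor $T$ of rank $k$, one obtains $2^k$ spatial tensors by choosing, for each slot taking a vector, either to insert $\partial_t-X$ or to precompose with $j_*$, and for each slot taking a covector, either to insert $dt$ or to precompose with $\mathcal P_X^*$ (e.g. $b\,dt+\eta\mapsto(b-\eta(X),\eta)$ and $a\partial_t+W\mapsto(a,W+aX)$). In a fixed order these form the tuple $\mathcal S(T;X)$. The operations $j_*$, $\Psi^*$ and $\mathcal L_S$ act on such tuples componentwise. *)

theory Defs
  imports "HOL-Analysis.Analysis"
begin

text \<open>Coordinates: a point of M = Sigma x I is a pair (x, t) with x :: real^'n, t :: real.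
  Tangent vectors a d_t + W and covectors b dt + eta are both represented by their
  components (W, a), resp. (eta, b), in real^'n x real; the pairing of a covector with a
  vector is then the inner product of the component pairs.\<close>

type_synonym ('n) pt = "(real^('n::finite)) \<times> real"

fun Ck :: "nat \<Rightarrow> 'a::real_normed_vector set \<Rightarrow> ('a \<Rightarrow> 'b::real_normed_vector) \<Rightarrow> bool" where
  "Ck 0 S f = continuous_on S f"
| "Ck (Suc k) S f =
     (\<exists>f'. (\<forall>x\<in>S. (f has_derivative f' x) (at x)) \<and> (\<forall>v. Ck k S (\<lambda>x. f' x v)))"

definition smooth_on :: "'a::real_normed_vector set \<Rightarrow> ('a \<Rightarrow> 'b::real_normed_vector) \<Rightarrow> bool" where
  "smooth_on S f \<longleftrightarrow> (\<forall>k. Ck k S f)"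

definition diffeo :: "('n::finite) pt set \<Rightarrow> ('n::finite) pt set \<Rightarrow> (('n::finite) pt \<Rightarrow> ('n::finite) pt) \<Rightarrow> bool" where
  "diffeo U V \<Psi> \<longleftrightarrow> smooth_on U \<Psi> \<and> bij_betw \<Psi> U V \<and>
     (\<exists>\<Phi>. smooth_on V \<Phi> \<and> (\<forall>p\<in>U. \<Phi> (\<Psi> p) = p) \<and> (\<forall>q\<in>V. \<Psi> (\<Phi> q) = q))"

text \<open>A tensor field of rank k on V: T p args, where args i (i < k) is the i-th argument;
  kinds i = True means slot i takes a vector, False means it takes a covector.\<close>
definition tensor_field :: "nat \<Rightarrow> ('n::finite) pt set \<Rightarrow> (('n::finite) pt \<Rightarrow> (nat \<Rightarrow> ('n::finite) pt) \<Rightarrow> real) \<Rightarrow> bool" where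
  "tensor_field k V T \<longleftrightarrow>
     (\<forall>p\<in>V. \<forall>args. \<forall>i<k. linear (\<lambda>x. T p (args(i := x)))) \<and>
     (\<forall>p args args'. (\<forall>i<k. args i = args' i) \<longrightarrow> T p args = T p args') \<and>
     (\<forall>args. smooth_on V (\<lambda>p. T p args))"

definition lorentzian_form :: "(('n::finite) pt \<Rightarrow> ('n::finite) pt \<Rightarrow> real) \<Rightarrow> bool" where
  "lorentzian_form B \<longleftrightarrow> bilinear B \<and> (\<forall>v w. B v w = B w v) \<and>
     (\<exists>e :: 'n option \<Rightarrow> ('n::finite) pt. \<forall>a b. B (e a) (e b) =
        (if a = b then (if a = None then -1 else 1) else 0))"

definition slice_compatible_lorentzian ::
  "('n::finite) pt set \<Rightarrow> (('n::finite) pt \<Rightarrow> ('n::finite) pt \<Rightarrow> ('n::finite) pt \<Rightarrow> real) \<Rightarrow> bool" where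
  "slice_compatible_lorentzian V g \<longleftrightarrow>
     (\<forall>v w. smooth_on V (\<lambda>p. g p v w)) \<and>
     (\<forall>p\<in>V. lorentzian_form (g p)) \<and>
     (\<forall>p\<in>V. \<forall>W. W \<noteq> 0 \<longrightarrow> g p (W, 0) (W, 0) > 0)"

definition unit_normal :: "(('n::finite) pt \<Rightarrow> ('n::finite) pt \<Rightarrow> ('n::finite) pt \<Rightarrow> real) \<Rightarrow> ('n::finite) pt \<Rightarrow> ('n::finite) pt" where
  "unit_normal g p = (THE \<nu>. snd \<nu> > 0 \<and> g p \<nu> \<nu> = -1 \<and> (\<forall>W. g p \<nu> (W, 0) = 0))"

definition shift :: "(('n::finite) pt \<Rightarrow> ('n::finite) pt \<Rightarrow> ('n::finite) pt \<Rightarrow> real) \<Rightarrow> ('n::finite) pt \<Rightarrow> ('n::finite) pt" where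
  "shift g p = (THE X. snd X = 0 \<and> (\<exists>N. ((0, 1) :: ('n::finite) pt) = N *\<^sub>R unit_normal g p + X))"

definition dmap :: "(('n::finite) pt \<Rightarrow> ('n::finite) pt) \<Rightarrow> ('n::finite) pt \<Rightarrow> ('n::finite) pt \<Rightarrow> ('n::finite) pt" where
  "dmap \<Psi> p = frechet_derivative \<Psi> (at p)"

text \<open>Pullback of a metric and of a tensor field (vectors pushed forward by d Psi,
  covectors pulled back by (d Psi)^(-1), i.e. omega maps to omega o (d Psi_p)^(-1)).\<close>
definition pullback_metric ::
  "(('n::finite) pt \<Rightarrow> ('n::finite) pt) \<Rightarrow> (('n::finite) pt \<Rightarrow> ('n::finite) pt \<Rightarrow> ('n::finite) pt \<Rightarrow> real) \<Rightarrow> ('n::finite) pt \<Rightarrow> ('n::finite) pt \<Rightarrow> ('n::finite) pt \<Rightarrow> real" where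
  "pullback_metric \<Psi> g p v w = g (\<Psi> p) (dmap \<Psi> p v) (dmap \<Psi> p w)"

definition pullback ::
  "nat \<Rightarrow> (nat \<Rightarrow> bool) \<Rightarrow> (('n::finite) pt \<Rightarrow> ('n::finite) pt) \<Rightarrow> (('n::finite) pt \<Rightarrow> (nat \<Rightarrow> ('n::finite) pt) \<Rightarrow> real)
     \<Rightarrow> ('n::finite) pt \<Rightarrow> (nat \<Rightarrow> ('n::finite) pt) \<Rightarrow> real" where
  "pullback k kinds \<Psi> T p args = T (\<Psi> p) (\<lambda>i. if i < k then
      (if kinds i then dmap \<Psi> p (args i) else adjoint (inv (dmap \<Psi> p)) (args i))
     else args i)"

definition jproj :: "('n::finite) pt \<Rightarrow> ('n::finite) pt" where
  "jproj v = (fst v, 0)"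

definition jstar ::
  "nat \<Rightarrow> (('n::finite) pt \<Rightarrow> (nat \<Rightarrow> ('n::finite) pt) \<Rightarrow> real) \<Rightarrow> ('n::finite) pt \<Rightarrow> (nat \<Rightarrow> ('n::finite) pt) \<Rightarrow> real" where
  "jstar k T p args = T p (\<lambda>i. if i < k then jproj (args i) else args i)"

definition PXstar :: "('n::finite) pt \<Rightarrow> ('n::finite) pt \<Rightarrow> ('n::finite) pt" where
  "PXstar X \<omega> = (fst \<omega>, fst \<omega> \<bullet> fst X)"

text \<open>The tuple S(T;X), indexed by choices c: c i = True means insert (d_t - X) (vector slot)
  resp. dt (covector slot) in slot i; c i = False means precompose with j_* resp. P_X^*.\<close>
definition decomp ::
  "nat \<Rightarrow> (nat \<Rightarrow> bool) \<Rightarrow> (('n::finite) pt \<Rightarrow> (nat \<Rightarrow> ('n::finite) pt) \<Rightarrow> real) \<Rightarrow> (('n::finite) pt \<Rightarrow> ('n::finite) pt)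
     \<Rightarrow> (nat \<Rightarrow> bool) \<Rightarrow> ('n::finite) pt \<Rightarrow> (nat \<Rightarrow> ('n::finite) pt) \<Rightarrow> real" where
  "decomp k kinds T X c p args = T p (\<lambda>i. if i < k then
      (if kinds i then (if c i then (0, 1) - X p else jproj (args i))
                  else (if c i then (0, 1) else PXstar (X p) (args i)))
     else args i)"

text \<open>Lie derivative along a vector field S (coordinate formula with constant-coefficient
  arguments).\<close>
definition lie ::
  "nat \<Rightarrow> (nat \<Rightarrow> bool) \<Rightarrow> (('n::finite) pt \<Rightarrow> ('n::finite) pt) \<Rightarrow> (('n::finite) pt \<Rightarrow> (nat \<Rightarrow> ('n::finite) pt) \<Rightarrow> real)
     \<Rightarrow> ('n::finite) pt \<Rightarrow> (nat \<Rightarrow> ('n::finite) pt) \<Rightarrow> real" where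
  "lie k kinds S T p args =
     frechet_derivative (\<lambda>q. T q args) (at p) (S p) +
     (\<Sum>i<k. if kinds i then T p (args(i := dmap S p (args i)))
             else - T p (args(i := adjoint (dmap S p) (args i))))"

end

theory Submission
  imports Defs
begin



definition esp :: "'n::finite \<Rightarrow> 'n pt" where "esp i = (axis i 1, 0)"

lemma pair_expand: "((W::real^'n::finite), 0::real) = (\<Sum>i\<in>UNIV. W$i *\<^sub>R esp i)"
proof -
  have "W = (\<Sum>i\<in>UNIV. W$i *\<^sub>R axis i 1)"
    by (metis (no_types, lifting) basis_expansion scalar_mult_eq_scaleR sum.cong)
  then show ?thesis unfolding esp_def
    by (simp add: fst_sum snd_sum prod_eq_iff)
qed

lemma lin_expand: "linear f \<Longrightarrow> f ((W::real^'n::finite), 0) = (\<Sum>i\<in>UNIV. W$i *\<^sub>R f (esp i))"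
  by (subst pair_expand) (simp add: linear_sum linear_scale)



definition good :: "('n::finite pt \<Rightarrow> 'n pt \<Rightarrow> real) \<Rightarrow> bool" where
  "good G \<longleftrightarrow> lorentzian_form G \<and> (\<forall>W. W \<noteq> 0 \<longrightarrow> G (W, 0) (W, 0) > 0)"

lemma good_spatial_nonneg: "good G \<Longrightarrow> G (W, 0) (W, 0) \<ge> 0"
proof (cases "W = 0")
  case True
  assume "good G"
  then have "bilinear G" by (simp add: good_def lorentzian_form_def)
  then have "G 0 0 = 0" by (rule bilinear_lzero)
  then show ?thesis using True by (simp add: zero_prod_def)
next
  case False
  assume "good G" then show ?thesis using False by (auto simp: good_def intro: less_imp_le)
qed

lemma good_orth_zero:
  assumes "good G" "\<forall>U. G (W, 0) (U, 0) = 0" shows "W = 0"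
  using assms unfolding good_def by force

lemma shift_char:
  fixes g :: "'n::finite pt \<Rightarrow> 'n pt \<Rightarrow> 'n pt \<Rightarrow> real"
  assumes gd: "good (g p)" and orth: "\<forall>U. g p (W, 1) (U, 0) = 0"
  shows "shift g p = (-W, 0)"
proof -
  let ?G = "g p"
  have bl: "bilinear ?G" and sym: "\<And>x y. ?G x y = ?G y x"
    using gd by (auto simp: good_def lorentzian_form_def)
  obtain e :: "'n option \<Rightarrow> 'n pt" where e: "\<And>a b. ?G (e a) (e b) = (if a = b then (if a = None then -1 else 1) else 0)"
    using gd by (auto simp: good_def lorentzian_form_def)
  define v where "v = (W, 1::real)"
  have orthv: "\<And>U. ?G v (U, 0) = 0" using orth v_def by simp
  have orthv': "\<And>U. ?G (U, 0) v = 0" using orthv sym by metis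
  have neg: "?G v v < 0"
  proof (rule ccontr)
    assume "\<not> ?G v v < 0"
    then have nn: "?G v v \<ge> 0" by simp
    have "?G z z \<ge> 0" for z
    proof -
      define a where "a = snd z"
      define s where "s = (fst z - a *\<^sub>R W, 0::real)"
      have z: "z = a *\<^sub>R v + s" unfolding s_def v_def a_def by (simp add: prod_eq_iff)
      have "?G z z = a * a * ?G v v + a * ?G v s + a * ?G s v + ?G s s"
        unfolding z by (simp add: bilinear_ladd[OF bl] bilinear_radd[OF bl] bilinear_lmul[OF bl] bilinear_rmul[OF bl] algebra_simps)
      also have "\<dots> = a * a * ?G v v + ?G s s" using orthv orthv' s_def by simp
      also have "\<dots> \<ge> 0" using nn good_spatial_nonneg[OF gd] s_def by simp
      finally show ?thesis .
    qed
    then show False using e[of None None] by (metis neg_0_le_iff_le not_one_le_zero)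
  qed
  define c where "c = sqrt (- ?G v v)"
  have cpos: "c > 0" using neg c_def by simp
  have cc: "c * c = - ?G v v" using neg c_def by (simp add: real_sqrt_mult_self)
  define \<nu> where "\<nu> = (1 / c) *\<^sub>R v"
  have un: "unit_normal g p = \<nu>"
    unfolding unit_normal_def
  proof (rule the_equality)
    show "0 < snd \<nu> \<and> ?G \<nu> \<nu> = -1 \<and> (\<forall>W. ?G \<nu> (W, 0) = 0)"
      using cpos cc orthv neg unfolding \<nu>_def
      by (simp add: v_def[symmetric] bilinear_lmul[OF bl] bilinear_rmul[OF bl] field_simps)
         (simp add: v_def)
  next
    fix \<mu> assume P: "0 < snd \<mu> \<and> ?G \<mu> \<mu> = -1 \<and> (\<forall>W. ?G \<mu> (W, 0) = 0)"
    define m where "m = snd \<mu>"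
    define s where "s = (fst \<mu> - m *\<^sub>R W, 0::real)"
    have mu: "\<mu> = m *\<^sub>R v + s" unfolding s_def v_def m_def by (simp add: prod_eq_iff)
    have "\<forall>U. ?G (fst \<mu> - m *\<^sub>R W, 0) (U, 0) = 0"
    proof
      fix U
      have "?G (fst \<mu> - m *\<^sub>R W, 0) (U, 0) = ?G (\<mu> - m *\<^sub>R v) (U, 0)"
      proof -
        have "\<mu> - m *\<^sub>R v = (m *\<^sub>R v + s) - m *\<^sub>R v"
          using mu by (rule arg_cong[where f="\<lambda>x. x - m *\<^sub>R v"])
        then have "\<mu> - m *\<^sub>R v = s" by (simp only: add_diff_cancel_left')
        then show ?thesis using s_def by simp
      qed
      also have "\<dots> = ?G \<mu> (U, 0) - m * ?G v (U, 0)" by (simp add: bilinear_lsub[OF bl] bilinear_lmul[OF bl])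
      also have "\<dots> = 0" using P orthv by simp
      finally show "?G (fst \<mu> - m *\<^sub>R W, 0) (U, 0) = 0" .
    qed
    then have "fst \<mu> - m *\<^sub>R W = 0" by (rule good_orth_zero[OF gd])
    then have "s = 0" using s_def by (simp add: zero_prod_def)
    then have mu2: "\<mu> = m *\<^sub>R v" using mu by simp
    then have "m * m * ?G v v = -1" using P by (simp add: bilinear_lmul[OF bl] bilinear_rmul[OF bl])
    then have "m * m = 1 / (c * c)" using cc neg by (simp add: field_simps)
    then have "m * m = (1/c) * (1/c)" by simp
    then have "m\<^sup>2 = (1/c)\<^sup>2" by (simp add: power2_eq_square)
    then have "m = 1 / c" using P cpos m_def power2_eq_iff_nonneg[of m "1/c"] by simp
    then show "\<mu> = \<nu>" using mu2 \<nu>_def by simp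
  qed
  show ?thesis
    unfolding shift_def un
  proof (rule the_equality)
    show "snd (-W, 0::real) = 0 \<and> (\<exists>N. ((0, 1) :: 'n pt) = N *\<^sub>R \<nu> + (-W, 0))"
      using cpos by (auto intro!: exI[of _ c] simp: \<nu>_def v_def)
  next
    fix X :: "'n pt" assume X: "snd X = 0 \<and> (\<exists>N. ((0, 1) :: 'n pt) = N *\<^sub>R \<nu> + X)"
    then obtain N where N: "((0, 1) :: 'n pt) = N *\<^sub>R \<nu> + X" by blast
    then have "1 = N / c" using X by (simp add: \<nu>_def v_def prod_eq_iff)
    then have "N = c" using cpos by (simp add: field_simps)
    then show "X = (-W, 0)" using N cpos by (simp add: \<nu>_def v_def prod_eq_iff add_eq_0_iff)
  qed
qed




definition Hm :: "('n::finite pt \<Rightarrow> 'n pt \<Rightarrow> real) \<Rightarrow> real^'n^'n" where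
  "Hm G = (\<chi> j i. G (esp i) (esp j))"
definition bv :: "('n::finite pt \<Rightarrow> 'n pt \<Rightarrow> real) \<Rightarrow> real^'n" where
  "bv G = (\<chi> j. G (0, 1) (esp j))"
definition Wc :: "('n::finite pt \<Rightarrow> 'n pt \<Rightarrow> real) \<Rightarrow> real^'n" where
  "Wc G = (\<chi> k. det (\<chi> i j. if j = k then (- bv G)$i else Hm G$i$j) / det (Hm G))"

lemma bil_expand2: "bilinear G \<Longrightarrow> G x ((U::real^'n::finite), 0) = (\<Sum>i\<in>UNIV. U$i * G x (esp i))"
  using lin_expand[of "G x" U] by (simp add: bilinear_def)

lemma bil_expand1: "bilinear G \<Longrightarrow> G ((U::real^'n::finite), 0) y = (\<Sum>i\<in>UNIV. U$i * G (esp i) y)"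
  using lin_expand[of "\<lambda>x. G x y" U] by (simp add: bilinear_def)

lemma Hm_det: assumes gd: "good G" shows "det (Hm G) \<noteq> 0"
proof -
  have bl: "bilinear G" using gd by (simp add: good_def lorentzian_form_def)
  have ker: "x = 0" if x: "Hm G *v x = 0" for x
  proof (rule ccontr)
    assume "x \<noteq> 0"
    then have pos: "G (x, 0) (x, 0) > 0" using gd by (simp add: good_def)
    have "G (x, 0) (x, 0) = (\<Sum>j\<in>UNIV. x$j * G (x, 0) (esp j))" by (rule bil_expand2[OF bl])
    also have "\<dots> = (\<Sum>j\<in>UNIV. x$j * (\<Sum>i\<in>UNIV. x$i * G (esp i) (esp j)))"
      by (simp add: bil_expand1[OF bl])
    also have "\<dots> = (\<Sum>j\<in>UNIV. x$j * (Hm G *v x)$j)"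
      by (simp add: matrix_vector_mult_def Hm_def mult.commute)
    also have "\<dots> = 0" using x by simp
    finally show False using pos by simp
  qed
  have "\<exists>B. B ** Hm G = mat 1" using ker matrix_left_invertible_ker by blast
  then show ?thesis using invertible_left_inverse invertible_det_nz by blast
qed

lemma Wc_orth: assumes gd: "good G" shows "\<forall>U. G (Wc G, 1) (U, 0) = 0"
proof
  fix U
  have bl: "bilinear G" using gd by (simp add: good_def lorentzian_form_def)
  have sol: "Hm G *v Wc G = - bv G"
    using cramer[OF Hm_det[OF gd], of "Wc G" "- bv G"] unfolding Wc_def by simp
  have "G (Wc G, 1) (esp j) = 0" for j
  proof -
    have "G (Wc G, 1) (esp j) = G ((Wc G, 0) + (0, 1)) (esp j)" by simp
    also have "\<dots> = G (Wc G, 0) (esp j) + G (0, 1) (esp j)" by (rule bilinear_ladd[OF bl])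
    also have "\<dots> = (Hm G *v Wc G)$j + bv G $ j"
      by (simp add: bil_expand1[OF bl] matrix_vector_mult_def Hm_def bv_def mult.commute)
    also have "\<dots> = 0" using sol by simp
    finally show ?thesis .
  qed
  then show "G (Wc G, 1) (U, 0) = 0" by (simp add: bil_expand2[OF bl])
qed

lemma shift_Wc: assumes "good (g p)" shows "shift g p = (- Wc (g p), 0)"
  by (rule shift_char[of g p, OF assms Wc_orth[OF assms]])



lemma lin_facts:
  fixes D :: "'n::finite pt \<Rightarrow> 'n pt"
  assumes lin: "linear D" and inj: "inj D"
  shows "linear (inv D)" "\<And>y. D (inv D y) = y" "\<And>x. inv D (D x) = x"
proof -
  show "linear (inv D)" using inj_linear_imp_inv_linear lin inj by blast
  have "surj D" using linear_inj_imp_surj lin inj by blast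
  then show "\<And>y. D (inv D y) = y" by (simp add: surj_f_inv_f)
  show "\<And>x. inv D (D x) = x" using inj by simp
qed

lemma pb_good_shift:
  fixes g G' :: "'n::finite pt \<Rightarrow> 'n pt \<Rightarrow> 'n pt \<Rightarrow> real" and D :: "'n pt \<Rightarrow> 'n pt"
  assumes gd: "good (g r)" and lin: "linear D" and inj: "inj D" and sn: "\<And>v. snd (D v) = snd v"
    and G': "G' q = (\<lambda>v w. g r (D v) (D w))"
  shows "good (G' q)" "shift G' q = (0, 1) - inv D ((0, 1) - shift g r)"
proof -
  note lf = lin_facts[OF lin inj]
  have bl: "bilinear (g r)" and sym: "\<And>x y. g r x y = g r y x"
    using gd by (auto simp: good_def lorentzian_form_def)
  obtain e :: "'n option \<Rightarrow> 'n pt" where e: "\<And>a b. g r (e a) (e b) = (if a = b then (if a = None then -1 else 1) else 0)"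
    using gd by (auto simp: good_def lorentzian_form_def)
  have bl': "bilinear (G' q)"
    unfolding G' bilinear_def
  proof safe
    fix x show "linear (\<lambda>y. g r (D x) (D y))"
    proof -
      have "linear (g r (D x))" using bl unfolding bilinear_def by blast
      then show ?thesis using linear_compose[OF lin, of "g r (D x)"] by (simp add: o_def)
    qed
  next
    fix y show "linear (\<lambda>x. g r (D x) (D y))"
    proof -
      have "linear (\<lambda>x. g r x (D y))" using bl unfolding bilinear_def by blast
      then show ?thesis using linear_compose[OF lin, of "\<lambda>x. g r x (D y)"] by (simp add: o_def)
    qed
  qed
  have lor: "lorentzian_form (G' q)"
    unfolding lorentzian_form_def
  proof (intro conjI allI exI)
    show "bilinear (G' q)" by (rule bl')
    show "\<And>v w. G' q v w = G' q w v" using sym G' by simp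
    show "\<And>a b. G' q ((inv D \<circ> e) a) ((inv D \<circ> e) b) = (if a = b then if a = None then - 1 else 1 else 0)"
      using e lf(2) G' by simp
  qed
  have sp: "W \<noteq> 0 \<longrightarrow> G' q (W, 0) (W, 0) > 0" for W
  proof
    assume "W \<noteq> 0"
    then have "D (W, 0) \<noteq> 0" using inj lin by (metis (no_types) linear_injective_0 zero_prod_def prod.inject)
    moreover have "D (W, 0) = (fst (D (W, 0)), 0)" using sn[of "(W,0)"] by (simp add: prod_eq_iff)
    ultimately have "fst (D (W, 0)) \<noteq> 0" by (metis zero_prod_def)
    then have "g r (fst (D (W, 0)), 0) (fst (D (W, 0)), 0) > 0" using gd by (simp add: good_def)
    then show "G' q (W, 0) (W, 0) > 0" using G' \<open>D (W, 0) = (fst (D (W, 0)), 0)\<close> by simp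
  qed
  show gd': "good (G' q)" using lor sp by (simp add: good_def)
  obtain W where X: "shift g r = (-W, 0)" and orth: "\<forall>U. g r (W, 1) (U, 0) = 0"
    using shift_Wc[of g r, OF gd] Wc_orth[OF gd] by blast
  define Y where "Y = inv D (W, 1)"
  have sY: "snd Y = 1" using sn[of Y] lf(2) Y_def by simp
  have orth': "\<forall>U. G' q (fst Y, 1) (U, 0) = 0"
  proof
    fix U
    have "(fst Y, 1) = Y" using sY by (simp add: prod_eq_iff)
    then have "G' q (fst Y, 1) (U, 0) = g r (W, 1) (D (U, 0))" using G' lf(2) Y_def by simp
    also have "D (U, 0) = (fst (D (U, 0)), 0)" using sn[of "(U,0)"] by (simp add: prod_eq_iff)
    finally show "G' q (fst Y, 1) (U, 0) = 0" using orth by metis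
  qed
  have "shift G' q = (- fst Y, 0)" by (rule shift_char[of G' q, OF gd' orth'])
  also have "\<dots> = (0, 1) - Y" using sY by (simp add: prod_eq_iff)
  also have "\<dots> = (0, 1) - inv D ((0, 1) - shift g r)" using X Y_def by simp
  finally show "shift G' q = (0, 1) - inv D ((0, 1) - shift g r)" .
qed



lemma adj_dt:
  fixes L :: "'n::finite pt \<Rightarrow> 'n pt"
  assumes "linear L" "\<And>x. snd (L x) = snd x"
  shows "adjoint L (0, 1) = (0, 1)"
proof -
  have "\<forall>x. x \<bullet> adjoint L (0, 1) = x \<bullet> (0, 1)"
    using assms by (simp add: adjoint_works inner_Pair_0)
  then show ?thesis using vector_eq_ldot by blast
qed

lemma adj_PX:
  fixes L :: "'n::finite pt \<Rightarrow> 'n pt"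
  assumes lin: "linear L" and sn: "\<And>x. snd (L x) = snd x" and sX: "snd X = 0"
  shows "adjoint L (PXstar ((0, 1) - L ((0, 1) - X)) a) = PXstar X (adjoint L (jproj a))"
proof -
  define Y where "Y = L ((0, 1) - X)"
  define \<eta> where "\<eta> = fst a"
  have sY: "snd Y = 1" using sn sX Y_def by simp
  have "z \<bullet> adjoint L (PXstar ((0, 1) - Y) a) = z \<bullet> PXstar X (adjoint L (jproj a))" for z
  proof -
    define \<omega> where "\<omega> = adjoint L (\<eta>, 0)"
    have "z \<bullet> adjoint L (PXstar ((0, 1) - Y) a) = L z \<bullet> PXstar ((0, 1) - Y) a"
      by (simp add: adjoint_works[OF lin])
    also have "\<dots> = fst (L z) \<bullet> \<eta> - snd z * (\<eta> \<bullet> fst Y)"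
      by (simp add: PXstar_def \<eta>_def sn inner_commute inner_prod_def)
    finally have lhs: "z \<bullet> adjoint L (PXstar ((0, 1) - Y) a) = fst (L z) \<bullet> \<eta> - snd z * (\<eta> \<bullet> fst Y)" .
    have "z \<bullet> PXstar X (adjoint L (jproj a)) = fst z \<bullet> fst \<omega> + snd z * (fst \<omega> \<bullet> fst X)"
      by (simp add: PXstar_def \<omega>_def jproj_def \<eta>_def inner_prod_def)
    also have "\<dots> = (fst z + snd z *\<^sub>R fst X, 0) \<bullet> \<omega>"
      by (simp add: inner_Pair_0 inner_add_right inner_commute)
    also have "\<dots> = L (fst z + snd z *\<^sub>R fst X, 0) \<bullet> (\<eta>, 0)"
      by (simp add: \<omega>_def adjoint_works[OF lin])
    also have "(fst z + snd z *\<^sub>R fst X, 0) = z - snd z *\<^sub>R ((0, 1) - X)"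
      using sX by (simp add: prod_eq_iff)
    also have "L (z - snd z *\<^sub>R ((0, 1) - X)) = L z - snd z *\<^sub>R Y"
      by (simp add: Y_def linear_diff[OF lin] linear_scale[OF lin])
    also have "(L z - snd z *\<^sub>R Y) \<bullet> (\<eta>, 0) = fst (L z) \<bullet> \<eta> - snd z * (\<eta> \<bullet> fst Y)"
      by (simp add: inner_prod_def inner_diff_right inner_commute)
    finally show ?thesis using lhs by simp
  qed
  then show ?thesis using vector_eq_ldot Y_def by blast
qed

lemma part1_point:
  fixes g :: "'n::finite pt \<Rightarrow> 'n pt \<Rightarrow> 'n pt \<Rightarrow> real" and \<Psi> :: "'n pt \<Rightarrow> 'n pt"
  assumes gd: "good (g (\<Psi> q))" and lin: "linear (dmap \<Psi> q)" and inj: "inj (dmap \<Psi> q)"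
    and sn: "\<And>v. snd (dmap \<Psi> q v) = snd v"
  shows "decomp k kinds (pullback k kinds \<Psi> T) (shift (pullback_metric \<Psi> g)) c q args
       = jstar k (pullback k kinds \<Psi> (decomp k kinds T (shift g) c)) q args"
proof -
  define D where "D = dmap \<Psi> q"
  define L where "L = inv D"
  define X where "X = shift g (\<Psi> q)"
  note lf = lin_facts[OF lin inj, folded D_def, folded L_def]
  have snL: "\<And>x. snd (L x) = snd x" using sn lf(2) D_def by metis
  have G': "pullback_metric \<Psi> g q = (\<lambda>v w. g (\<Psi> q) (D v) (D w))"
    by (simp add: pullback_metric_def D_def fun_eq_iff)
  have Xh: "shift (pullback_metric \<Psi> g) q = (0, 1) - L ((0, 1) - X)"
    using pb_good_shift(2)[of g "\<Psi> q" "dmap \<Psi> q" "pullback_metric \<Psi> g" q, OF gd lin inj sn G'[unfolded D_def]] unfolding L_def D_def X_def .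
  have sX: "snd X = 0" using shift_Wc[of g "\<Psi> q", OF gd] X_def by simp
  have snD: "\<And>v. snd (D v) = snd v" using sn D_def by simp
  show ?thesis
    unfolding decomp_def pullback_def jstar_def Xh
    unfolding D_def[symmetric] L_def[symmetric] X_def[symmetric]
  proof (rule arg_cong[where f="T (\<Psi> q)"], rule ext)
    fix i
    show "(if i < k then if kinds i then D (if i < k then if kinds i then if c i then (0, 1) - ((0, 1) - L ((0, 1) - X)) else jproj (args i) else if c i then (0, 1) else PXstar ((0, 1) - L ((0, 1) - X)) (args i) else args i)
          else adjoint L (if i < k then if kinds i then if c i then (0, 1) - ((0, 1) - L ((0, 1) - X)) else jproj (args i) else if c i then (0, 1) else PXstar ((0, 1) - L ((0, 1) - X)) (args i) else args i)
         else if i < k then if kinds i then if c i then (0, 1) - ((0, 1) - L ((0, 1) - X)) else jproj (args i) else if c i then (0, 1) else PXstar ((0, 1) - L ((0, 1) - X)) (args i) else args i) =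
        (if i < k then if kinds i then if c i then (0, 1) - X else jproj (if i < k then if kinds i then D (if i < k then jproj (args i) else args i) else adjoint L (if i < k then jproj (args i) else args i) else if i < k then jproj (args i) else args i)
          else if c i then (0, 1) else PXstar X (if i < k then if kinds i then D (if i < k then jproj (args i) else args i) else adjoint L (if i < k then jproj (args i) else args i) else if i < k then jproj (args i) else args i)
         else if i < k then if kinds i then D (if i < k then jproj (args i) else args i) else adjoint L (if i < k then jproj (args i) else args i) else if i < k then jproj (args i) else args i)"
      using lf(2) snD adj_dt[OF lf(1) snL] adj_PX[OF lf(1) snL sX]
      by (simp add: jproj_def prod_eq_iff)
  qed
qed



lemma smooth_D2:
  assumes "smooth_on S f"
  shows "\<exists>f'. (\<forall>x\<in>S. (f has_derivative f' x) (at x)) \<and> (\<forall>v. \<forall>x\<in>S. (\<lambda>y. f' y v) differentiable (at x))"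
proof -
  have "Ck (Suc (Suc 0)) S f" using assms by (simp add: smooth_on_def del: Ck.simps)
  then obtain f' where f': "\<forall>x\<in>S. (f has_derivative f' x) (at x)" and c1: "\<forall>v. Ck (Suc 0) S (\<lambda>x. f' x v)"
    by auto
  have "\<forall>v. \<forall>x\<in>S. (\<lambda>y. f' y v) differentiable (at x)"
  proof (intro allI ballI)
    fix v x assume "x \<in> S"
    from c1[rule_format, of v] obtain h where "\<forall>x\<in>S. ((\<lambda>x. f' x v) has_derivative h x) (at x)" by auto
    then show "(\<lambda>y. f' y v) differentiable (at x)" using \<open>x \<in> S\<close> differentiableI by blast
  qed
  then show ?thesis using f' by blast
qed

lemma smooth_D1:
  assumes "smooth_on S f" "x \<in> S"
  shows "f differentiable (at x)"
proof -
  have "Ck (Suc 0) S f" using assms by (simp add: smooth_on_def del: Ck.simps)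
  then show ?thesis using assms(2) differentiableI by auto
qed

lemma diff_transf:
  assumes "f differentiable (at p)" "open S" "p \<in> S" "\<And>x. x \<in> S \<Longrightarrow> f x = g x"
  shows "g differentiable (at p)"
  using assms by (meson differentiable_def has_derivative_transform_within_open)

locale psi_setting =
  fixes U V :: "'n::finite pt set" and \<Psi> :: "'n pt \<Rightarrow> 'n pt"
  assumes oU: "open U" and oV: "open V" and dif: "diffeo U V \<Psi>"
    and tpres: "\<forall>p\<in>U. snd (\<Psi> p) = snd p"
begin

lemma ex_data: "\<exists>\<Phi> \<psi>' \<phi>'. (\<forall>x\<in>U. (\<Psi> has_derivative \<psi>' x) (at x)) \<and> (\<forall>v. \<forall>x\<in>U. (\<lambda>y. \<psi>' y v) differentiable (at x))
  \<and> (\<forall>x\<in>V. (\<Phi> has_derivative \<phi>' x) (at x)) \<and> (\<forall>v. \<forall>x\<in>V. (\<lambda>y. \<phi>' y v) differentiable (at x))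
  \<and> (\<forall>p\<in>U. \<Phi> (\<Psi> p) = p) \<and> (\<forall>p\<in>U. \<Psi> p \<in> V)"
proof -
  obtain \<Phi> where sP: "smooth_on V \<Phi>" and l: "\<forall>p\<in>U. \<Phi> (\<Psi> p) = p"
    using dif unfolding diffeo_def by blast
  have sPsi: "smooth_on U \<Psi>" and bij: "bij_betw \<Psi> U V" using dif unfolding diffeo_def by auto
  obtain \<psi>' where a: "(\<forall>x\<in>U. (\<Psi> has_derivative \<psi>' x) (at x)) \<and> (\<forall>v. \<forall>x\<in>U. (\<lambda>y. \<psi>' y v) differentiable (at x))"
    using smooth_D2[OF sPsi] by blast
  obtain \<phi>' where b: "(\<forall>x\<in>V. (\<Phi> has_derivative \<phi>' x) (at x)) \<and> (\<forall>v. \<forall>x\<in>V. (\<lambda>y. \<phi>' y v) differentiable (at x))"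
    using smooth_D2[OF sP] by blast
  have "\<forall>p\<in>U. \<Psi> p \<in> V" using bij bij_betwE by blast
  then show ?thesis using a b l by blast
qed

definition "Phi = (SOME \<Phi>. \<exists>\<psi>' \<phi>'. (\<forall>x\<in>U. (\<Psi> has_derivative \<psi>' x) (at x)) \<and> (\<forall>v. \<forall>x\<in>U. (\<lambda>y. \<psi>' y v) differentiable (at x))
  \<and> (\<forall>x\<in>V. (\<Phi> has_derivative \<phi>' x) (at x)) \<and> (\<forall>v. \<forall>x\<in>V. (\<lambda>y. \<phi>' y v) differentiable (at x))
  \<and> (\<forall>p\<in>U. \<Phi> (\<Psi> p) = p) \<and> (\<forall>p\<in>U. \<Psi> p \<in> V))"

lemma Phi_data: "\<exists>\<psi>' \<phi>'. (\<forall>x\<in>U. (\<Psi> has_derivative \<psi>' x) (at x)) \<and> (\<forall>v. \<forall>x\<in>U. (\<lambda>y. \<psi>' y v) differentiable (at x))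
  \<and> (\<forall>x\<in>V. (Phi has_derivative \<phi>' x) (at x)) \<and> (\<forall>v. \<forall>x\<in>V. (\<lambda>y. \<phi>' y v) differentiable (at x))
  \<and> (\<forall>p\<in>U. Phi (\<Psi> p) = p) \<and> (\<forall>p\<in>U. \<Psi> p \<in> V)"
  unfolding Phi_def using someI_ex[OF ex_data] .

definition "psi' = (SOME \<psi>'. \<exists>\<phi>'. (\<forall>x\<in>U. (\<Psi> has_derivative \<psi>' x) (at x)) \<and> (\<forall>v. \<forall>x\<in>U. (\<lambda>y. \<psi>' y v) differentiable (at x))
  \<and> (\<forall>x\<in>V. (Phi has_derivative \<phi>' x) (at x)) \<and> (\<forall>v. \<forall>x\<in>V. (\<lambda>y. \<phi>' y v) differentiable (at x))
  \<and> (\<forall>p\<in>U. Phi (\<Psi> p) = p) \<and> (\<forall>p\<in>U. \<Psi> p \<in> V))"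

lemma psi'_data: "\<exists>\<phi>'. (\<forall>x\<in>U. (\<Psi> has_derivative psi' x) (at x)) \<and> (\<forall>v. \<forall>x\<in>U. (\<lambda>y. psi' y v) differentiable (at x))
  \<and> (\<forall>x\<in>V. (Phi has_derivative \<phi>' x) (at x)) \<and> (\<forall>v. \<forall>x\<in>V. (\<lambda>y. \<phi>' y v) differentiable (at x))
  \<and> (\<forall>p\<in>U. Phi (\<Psi> p) = p) \<and> (\<forall>p\<in>U. \<Psi> p \<in> V)"
  unfolding psi'_def using someI_ex[OF Phi_data] .

definition "phi' = (SOME \<phi>'. (\<forall>x\<in>U. (\<Psi> has_derivative psi' x) (at x)) \<and> (\<forall>v. \<forall>x\<in>U. (\<lambda>y. psi' y v) differentiable (at x))
  \<and> (\<forall>x\<in>V. (Phi has_derivative \<phi>' x) (at x)) \<and> (\<forall>v. \<forall>x\<in>V. (\<lambda>y. \<phi>' y v) differentiable (at x))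
  \<and> (\<forall>p\<in>U. Phi (\<Psi> p) = p) \<and> (\<forall>p\<in>U. \<Psi> p \<in> V))"

lemma all_data: "(\<forall>x\<in>U. (\<Psi> has_derivative psi' x) (at x)) \<and> (\<forall>v. \<forall>x\<in>U. (\<lambda>y. psi' y v) differentiable (at x))
  \<and> (\<forall>x\<in>V. (Phi has_derivative phi' x) (at x)) \<and> (\<forall>v. \<forall>x\<in>V. (\<lambda>y. phi' y v) differentiable (at x))
  \<and> (\<forall>p\<in>U. Phi (\<Psi> p) = p) \<and> (\<forall>p\<in>U. \<Psi> p \<in> V)"
  unfolding phi'_def using someI_ex[OF psi'_data] .

lemma Psi_der: "x \<in> U \<Longrightarrow> (\<Psi> has_derivative psi' x) (at x)" using all_data by blast
lemma psi'_diff: "x \<in> U \<Longrightarrow> (\<lambda>y. psi' y v) differentiable (at x)" using all_data by blast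
lemma Phi_der: "x \<in> V \<Longrightarrow> (Phi has_derivative phi' x) (at x)" using all_data by blast
lemma phi'_diff: "x \<in> V \<Longrightarrow> (\<lambda>y. phi' y v) differentiable (at x)" using all_data by blast
lemma Phi_Psi: "p \<in> U \<Longrightarrow> Phi (\<Psi> p) = p" using all_data by blast
lemma Psi_V: "p \<in> U \<Longrightarrow> \<Psi> p \<in> V" using all_data by blast

lemma dmap_eq: "q \<in> U \<Longrightarrow> dmap \<Psi> q = psi' q"
  unfolding dmap_def using frechet_derivative_at[OF Psi_der] by simp

lemma dmap_lin: "q \<in> U \<Longrightarrow> linear (dmap \<Psi> q)"
  using dmap_eq Psi_der has_derivative_linear by metis

lemma Psi_cont: "q \<in> U \<Longrightarrow> isCont \<Psi> q"
  using Psi_der has_derivative_continuous by blast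

lemma Psi_differentiable: "q \<in> U \<Longrightarrow> \<Psi> differentiable (at q)"
  using Psi_der differentiableI by blast

lemma dmap_left: assumes q: "q \<in> U" shows "phi' (\<Psi> q) (dmap \<Psi> q v) = v"
proof -
  have "((Phi \<circ> \<Psi>) has_derivative (phi' (\<Psi> q) \<circ> psi' q)) (at q)"
    using diff_chain_at[OF Psi_der[OF q] Phi_der[OF Psi_V[OF q]]] .
  moreover have "((Phi \<circ> \<Psi>) has_derivative (\<lambda>x. x)) (at q)"
    by (rule has_derivative_transform_within_open[OF has_derivative_ident oU q]) (simp add: Phi_Psi)
  ultimately have "phi' (\<Psi> q) \<circ> psi' q = (\<lambda>x. x)" by (rule has_derivative_unique)
  then show ?thesis using dmap_eq[OF q] by (metis comp_apply)
qed

lemma dmap_inj: "q \<in> U \<Longrightarrow> inj (dmap \<Psi> q)"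
  by (metis dmap_left injI)

lemma dmap_inv: assumes q: "q \<in> U" shows "inv (dmap \<Psi> q) w = phi' (\<Psi> q) w"
proof -
  note lf = lin_facts[OF dmap_lin[OF q] dmap_inj[OF q]]
  have "phi' (\<Psi> q) w = phi' (\<Psi> q) (dmap \<Psi> q (inv (dmap \<Psi> q) w))" using lf(2) by simp
  also have "\<dots> = inv (dmap \<Psi> q) w" by (rule dmap_left[OF q])
  finally show ?thesis by simp
qed

lemma dmap_snd: assumes q: "q \<in> U" shows "snd (dmap \<Psi> q v) = snd v"
proof -
  have "((\<lambda>x. snd (\<Psi> x)) has_derivative (\<lambda>v. snd (psi' q v))) (at q)"
    using has_derivative_snd[OF Psi_der[OF q]] .
  moreover have "((\<lambda>x. snd (\<Psi> x)) has_derivative (\<lambda>v. snd v)) (at q)"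
    by (rule has_derivative_transform_within_open[OF has_derivative_snd[OF has_derivative_ident] oU q]) (simp add: tpres)
  ultimately have "(\<lambda>v. snd (psi' q v)) = (\<lambda>v. snd v)" by (rule has_derivative_unique)
  then show ?thesis using dmap_eq[OF q] by metis
qed

lemma dmap_diff: "q \<in> U \<Longrightarrow> (\<lambda>y. dmap \<Psi> y v) differentiable (at q)"
  by (rule diff_transf[OF psi'_diff oU]) (auto simp: dmap_eq)

lemma inv_dmap_diff: assumes q: "q \<in> U" shows "(\<lambda>y. inv (dmap \<Psi> y) w) differentiable (at q)"
proof -
  have "((\<lambda>z. phi' z w) \<circ> \<Psi>) differentiable (at q)"
    by (rule differentiable_chain_at[OF Psi_differentiable[OF q] phi'_diff[OF Psi_V[OF q]]])
  then show ?thesis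
    by (rule diff_transf[OF _ oU q]) (simp add: dmap_inv)
qed

end



lemma diff_transf_ev:
  assumes "f differentiable (at p)" "eventually (\<lambda>x. f x = g x) (at p)" "f p = g p"
  shows "g differentiable (at p)"
  using assms has_derivative_transform_eventually[of f _ p UNIV g] unfolding differentiable_def by blast

lemma ev_in_V:
  assumes "isCont r p" "open V" "r p \<in> V"
  shows "eventually (\<lambda>q. r q \<in> V) (at p)"
  using assms unfolding isCont_def by (simp add: topological_tendstoD)

lemma T_diff:
  fixes T :: "'n::finite pt \<Rightarrow> (nat \<Rightarrow> 'n pt) \<Rightarrow> real" and r :: "'n pt \<Rightarrow> 'n pt"
    and A :: "'n pt \<Rightarrow> nat \<Rightarrow> 'n pt"
  assumes tf: "tensor_field k V T" and oV: "open V" and rd: "r differentiable (at p)" and rp: "r p \<in> V"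
    and Ad: "\<And>i. i < k \<Longrightarrow> (\<lambda>q. A q i) differentiable (at p)"
  shows "(\<lambda>q. T (r q) (A q)) differentiable (at p)"
proof -
  have lin: "\<And>p args i. p \<in> V \<Longrightarrow> i < k \<Longrightarrow> linear (\<lambda>x. T p (args(i := x)))"
    and agr: "\<And>p args args'. (\<forall>i<k. args i = args' i) \<Longrightarrow> T p args = T p args'"
    and sm: "\<And>args. smooth_on V (\<lambda>p. T p args)"
    using tf unfolding tensor_field_def by blast+
  have ev: "eventually (\<lambda>q. r q \<in> V) (at p)"
    using ev_in_V[OF differentiable_imp_continuous_within[OF rd, unfolded continuous_within[symmetric]] oV rp]
    by (simp add: isCont_def continuous_at)
  have main: "\<forall>A. (\<forall>i\<in>F. (\<lambda>q. A q i) differentiable (at p)) \<longrightarrow> (\<forall>i<k. i \<notin> F \<longrightarrow> (\<forall>q. A q i = A p i))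
      \<longrightarrow> (\<lambda>q. T (r q) (A q)) differentiable (at p)"
    if "finite F" "F \<subseteq> {..<k}" for F
    using that
  proof (induction F rule: finite_induct)
    case empty
    show ?case
    proof (intro allI impI)
      fix A :: "'n pt \<Rightarrow> nat \<Rightarrow> 'n pt"
      assume c: "\<forall>i<k. i \<notin> {} \<longrightarrow> (\<forall>q. A q i = A p i)"
      have eq: "(\<lambda>q. T (r q) (A q)) = (\<lambda>z. T z (A p)) \<circ> r"
        using c agr by (auto simp: fun_eq_iff)
      show "(\<lambda>q. T (r q) (A q)) differentiable (at p)"
        unfolding eq by (rule differentiable_chain_at[OF rd smooth_D1[OF sm rp]])
    qed
  next
    case (insert i F)
    have IH: "\<forall>A. (\<forall>i\<in>F. (\<lambda>q. A q i) differentiable (at p)) \<longrightarrow> (\<forall>i<k. i \<notin> F \<longrightarrow> (\<forall>q. A q i = A p i))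
      \<longrightarrow> (\<lambda>q. T (r q) (A q)) differentiable (at p)" using insert.IH insert.prems by auto
    have ik: "i < k" using insert.prems by auto
    show ?case
    proof (intro allI impI)
      fix A :: "'n pt \<Rightarrow> nat \<Rightarrow> 'n pt"
      assume d: "\<forall>j\<in>insert i F. (\<lambda>q. A q j) differentiable (at p)"
        and c: "\<forall>j<k. j \<notin> insert i F \<longrightarrow> (\<forall>q. A q j = A p j)"
      have each: "(\<lambda>q. T (r q) ((A q)(i := b))) differentiable (at p)" for b
      proof -
        have h1: "\<forall>j\<in>F. (\<lambda>q. ((A q)(i := b)) j) differentiable (at p)"
        proof
          fix j assume "j \<in> F"
          then have "j \<noteq> i" using insert.hyps by auto
          then show "(\<lambda>q. ((A q)(i := b)) j) differentiable (at p)" using d \<open>j \<in> F\<close> by simp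
        qed
        have h2: "\<forall>j<k. j \<notin> F \<longrightarrow> (\<forall>q. ((A q)(i := b)) j = ((A p)(i := b)) j)" using c by auto
        from IH have "(\<forall>j\<in>F. (\<lambda>q. ((A q)(i := b)) j) differentiable (at p)) \<longrightarrow> (\<forall>j<k. j \<notin> F \<longrightarrow> (\<forall>q. ((A q)(i := b)) j = ((A p)(i := b)) j))
      \<longrightarrow> (\<lambda>q. T (r q) ((A q)(i := b))) differentiable (at p)"
          by (rule allE[where x="\<lambda>q. (A q)(i := b)"])
        then show ?thesis using h1 h2 by blast
      qed
      have sumd: "(\<lambda>q. \<Sum>b\<in>Basis. (A q i \<bullet> b) * T (r q) ((A q)(i := b))) differentiable (at p)"
        using each d by (auto intro!: differentiable_sum differentiable_mult)
      have eqq: "(\<Sum>b\<in>Basis. (A q i \<bullet> b) * T (r q) ((A q)(i := b))) = T (r q) (A q)" if "r q \<in> V" for q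
      proof -
        have "T (r q) (A q) = T (r q) ((A q)(i := (\<Sum>b\<in>Basis. (A q i \<bullet> b) *\<^sub>R b)))"
          by (simp add: euclidean_representation)
        also have "\<dots> = (\<Sum>b\<in>Basis. (A q i \<bullet> b) *\<^sub>R T (r q) ((A q)(i := b)))"
          using linear_sum[OF lin[OF that ik, of "A q"], of "\<lambda>b. (A q i \<bullet> b) *\<^sub>R b" Basis]
            linear_scale[OF lin[OF that ik, of "A q"]] by simp
        finally show ?thesis by simp
      qed
      show "(\<lambda>q. T (r q) (A q)) differentiable (at p)"
        by (rule diff_transf_ev[OF sumd]) (use ev eqq rp in \<open>auto elim: eventually_mono\<close>)
    qed
  qed
  have "(\<lambda>q. T (r q) (A q)) differentiable (at p)"
    using main[of "{..<k}"] Ad by auto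
  then show ?thesis .
qed



lemma differentiable_prod':
  fixes f :: "'i \<Rightarrow> 'a::real_normed_vector \<Rightarrow> real"
  assumes "finite I" "\<And>i. i \<in> I \<Longrightarrow> f i differentiable (at p)"
  shows "(\<lambda>x. \<Prod>i\<in>I. f i x) differentiable (at p)"
  using assms by (induction I rule: finite_induct) (auto intro!: differentiable_mult)

lemma vec_diff:
  fixes h :: "'n::finite \<Rightarrow> 'a::real_normed_vector \<Rightarrow> real"
  assumes "\<And>k. h k differentiable (at p)"
  shows "(\<lambda>q. \<chi> k. h k q) differentiable (at p)"
proof -
  have eq: "(\<lambda>q. \<chi> k. h k q) = (\<lambda>q. \<Sum>k\<in>UNIV. h k q *\<^sub>R axis k 1)"
    by (auto simp: fun_eq_iff vec_eq_iff axis_def sum_component if_distrib cong: if_cong)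
  show ?thesis unfolding eq using assms by (auto intro!: differentiable_sum differentiable_scaleR)
qed

lemma det_diff:
  fixes M :: "'a::real_normed_vector \<Rightarrow> real^'n::finite^'n"
  assumes "\<And>i j. (\<lambda>q. M q $ i $ j) differentiable (at p)"
  shows "(\<lambda>q. det (M q)) differentiable (at p)"
  unfolding det_def using assms
  by (auto intro!: differentiable_sum differentiable_mult differentiable_prod')

lemma good_of_slice: "slice_compatible_lorentzian V g \<Longrightarrow> q \<in> V \<Longrightarrow> good (g q)"
  by (simp add: slice_compatible_lorentzian_def good_def)

lemma shift_diff:
  fixes g :: "'n::finite pt \<Rightarrow> 'n pt \<Rightarrow> 'n pt \<Rightarrow> real"
  assumes sc: "slice_compatible_lorentzian V g" and oV: "open V" and p: "p \<in> V"
  shows "shift g differentiable (at p)"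
proof -
  have ent: "\<And>v w. (\<lambda>q. g q v w) differentiable (at p)"
    using sc p smooth_D1 unfolding slice_compatible_lorentzian_def by blast
  have dH: "(\<lambda>q. det (Hm (g q))) differentiable (at p)"
    by (rule det_diff) (simp add: Hm_def ent)
  have dM: "(\<lambda>q. det (\<chi> i j. if j = k then (- bv (g q))$i else Hm (g q)$i$j)) differentiable (at p)" for k
  proof (rule det_diff)
    fix i j
    show "(\<lambda>q. (\<chi> i j. if j = k then (- bv (g q))$i else Hm (g q)$i$j) $ i $ j) differentiable (at p)"
      by (cases "j = k") (simp_all add: Hm_def bv_def ent)
  qed
  have dW: "(\<lambda>q. Wc (g q)) differentiable (at p)"
    unfolding Wc_def by (rule vec_diff) (use dH dM in \<open>auto intro!: differentiable_divide simp: Hm_det[OF good_of_slice[OF sc p]]\<close>)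
  have "(\<lambda>q. (- Wc (g q), 0::real)) differentiable (at p)"
    using dW by (auto intro!: differentiable_Pair differentiable_minus)
  then show ?thesis
    by (rule diff_transf[OF _ oV p]) (simp add: shift_Wc good_of_slice[OF sc])
qed




lemma slice_deriv:
  fixes f h :: "'n::finite pt \<Rightarrow> 'b::real_normed_vector"
  assumes oU: "open U" and p: "p \<in> U" and fd: "(f has_derivative F) (at p)" and hd: "(h has_derivative H) (at p)"
    and eq: "\<And>q. q \<in> U \<Longrightarrow> snd q = snd p \<Longrightarrow> f q = h q"
  shows "F (W, 0) = H (W, 0)"
proof -
  define v :: "'n pt" where "v = (W, 0)"
  obtain e where e: "e > 0" "ball p e \<subseteq> U" using oU p open_contains_ball by blast
  have gd: "((\<lambda>s::real. p + s *\<^sub>R v) has_derivative (\<lambda>s. s *\<^sub>R v)) (at 0)"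
    by (auto intro!: derivative_eq_intros)
  have f1: "((\<lambda>s. f (p + s *\<^sub>R v)) has_derivative (\<lambda>s. F (s *\<^sub>R v))) (at 0)"
    using diff_chain_at[OF gd, of f F] fd by (simp add: o_def)
  have h1: "((\<lambda>s. h (p + s *\<^sub>R v)) has_derivative (\<lambda>s. H (s *\<^sub>R v))) (at 0)"
    using diff_chain_at[OF gd, of h H] hd by (simp add: o_def)
  define d where "d = e / (norm v + 1)"
  have dpos: "d > 0" using e d_def by (smt (verit) divide_pos_pos norm_ge_zero)
  have "((\<lambda>s. h (p + s *\<^sub>R v)) has_derivative (\<lambda>s. F (s *\<^sub>R v))) (at 0)"
  proof (rule has_derivative_transform_within[OF f1 dpos])
    show "(0::real) \<in> UNIV" by simp
    fix s :: real assume "dist s 0 < d"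
    then have "\<bar>s\<bar> < d" by simp
    then have "\<bar>s\<bar> * norm v < e"
      using e d_def dpos
      by (smt (verit, ccfv_SIG) divide_pos_pos mult_left_mono norm_ge_zero pos_less_divide_eq)
    then have "p + s *\<^sub>R v \<in> U" using e by (auto simp: dist_norm)
    moreover have "snd (p + s *\<^sub>R v) = snd p" by (simp add: v_def)
    ultimately show "f (p + s *\<^sub>R v) = h (p + s *\<^sub>R v)" using eq by blast
  qed
  then have "(\<lambda>s. F (s *\<^sub>R v)) = (\<lambda>s. H (s *\<^sub>R v))" using h1 by (rule has_derivative_unique)
  then have "F (1 *\<^sub>R v) = H (1 *\<^sub>R v)" by metis
  then show ?thesis by (simp add: v_def)
qed

lemma adjoint_expand:
  fixes L :: "'a::euclidean_space \<Rightarrow> 'a"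
  assumes "linear L"
  shows "adjoint L w = (\<Sum>b\<in>Basis. (w \<bullet> L b) *\<^sub>R b)"
proof -
  have "adjoint L w = (\<Sum>b\<in>Basis. (adjoint L w \<bullet> b) *\<^sub>R b)" by (simp add: euclidean_representation)
  also have "\<dots> = (\<Sum>b\<in>Basis. (w \<bullet> L b) *\<^sub>R b)"
    using adjoint_works[OF assms] by (simp add: inner_commute)
  finally show ?thesis .
qed

lemma adj_fix:
  fixes L :: "'n::finite pt \<Rightarrow> 'n pt"
  assumes "linear L" "\<And>U. L (U, 0) = (U, 0)"
  shows "fst (adjoint L (\<eta>, 0)) = \<eta>"
proof -
  have "\<forall>U. U \<bullet> fst (adjoint L (\<eta>, 0)) = U \<bullet> \<eta>"
  proof
    fix U
    have "U \<bullet> fst (adjoint L (\<eta>, 0)) = (U, 0) \<bullet> adjoint L (\<eta>, 0)" by (simp add: inner_prod_def)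
    also have "\<dots> = L (U, 0) \<bullet> (\<eta>, 0)" by (rule adjoint_works[OF assms(1)])
    finally show "U \<bullet> fst (adjoint L (\<eta>, 0)) = U \<bullet> \<eta>" using assms(2) by simp
  qed
  then show ?thesis using vector_eq_ldot by blast
qed

lemma differentiable_fst':
  "f differentiable F \<Longrightarrow> (\<lambda>x. fst (f x)) differentiable F"
  unfolding differentiable_def using has_derivative_fst by blast



theorem lemma5p1:
  fixes \<Sigma> :: "(real^'n) set" and I :: "real set"
    and U V :: "('n::finite) pt set" and \<Psi> :: "('n::finite) pt \<Rightarrow> ('n::finite) pt"
    and g :: "('n::finite) pt \<Rightarrow> ('n::finite) pt \<Rightarrow> ('n::finite) pt \<Rightarrow> real"
    and k :: nat and kinds :: "nat \<Rightarrow> bool"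
    and T :: "('n::finite) pt \<Rightarrow> (nat \<Rightarrow> ('n::finite) pt) \<Rightarrow> real"
  assumes "open \<Sigma>" and "open I" and "is_interval I"
    and "open U" and "open V" and "U \<subseteq> \<Sigma> \<times> I" and "V \<subseteq> \<Sigma> \<times> I"
    and "diffeo U V \<Psi>"
    and "\<forall>p\<in>U. snd (\<Psi> p) = snd p"
    and "slice_compatible_lorentzian V g"
    and "tensor_field k V T"
  shows "(\<forall>c. \<forall>p\<in>U. \<forall>args.
            decomp k kinds (pullback k kinds \<Psi> T) (shift (pullback_metric \<Psi> g)) c p args
          = jstar k (pullback k kinds \<Psi> (decomp k kinds T (shift g) c)) p args)
     \<and> (\<forall>t0. (\<forall>p\<in>U. snd p = t0 \<longrightarrow> \<Psi> p = p) \<longrightarrow>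
          (\<forall>c. \<forall>p\<in>U. \<forall>args. snd p = t0 \<longrightarrow>
              decomp k kinds (pullback k kinds \<Psi> T) (shift (pullback_metric \<Psi> g)) c p args
            = decomp k kinds T (shift g) c p args)
        \<and> (\<forall>S. smooth_on U S \<and> (\<forall>p\<in>U. snd (S p) = 0) \<longrightarrow>
          (\<forall>c. \<forall>p\<in>U. \<forall>args. snd p = t0 \<longrightarrow>
              lie k kinds S (decomp k kinds (pullback k kinds \<Psi> T)
                                 (shift (pullback_metric \<Psi> g)) c) p args
            = lie k kinds S (decomp k kinds T (shift g) c) p args)))"
proof -
  interpret psi_setting U V \<Psi> using assms(4,5,8,9) by unfold_locales
  have sc: "slice_compatible_lorentzian V g" and tf: "tensor_field k V T" using assms(10,11) .
  have gdV: "\<And>q. q \<in> V \<Longrightarrow> good (g q)" using good_of_slice[OF sc] .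
  have P1: "\<And>c q args. q \<in> U \<Longrightarrow>
            decomp k kinds (pullback k kinds \<Psi> T) (shift (pullback_metric \<Psi> g)) c q args
          = jstar k (pullback k kinds \<Psi> (decomp k kinds T (shift g) c)) q args"
  proof -
    fix c q args assume q: "q \<in> U"
    show "decomp k kinds (pullback k kinds \<Psi> T) (shift (pullback_metric \<Psi> g)) c q args
          = jstar k (pullback k kinds \<Psi> (decomp k kinds T (shift g) c)) q args"
      by (rule part1_point[of g \<Psi> q, OF gdV[OF Psi_V[OF q]] dmap_lin[OF q] dmap_inj[OF q] dmap_snd[OF q]])
  qed
  have dXP: "(\<lambda>q. shift g (\<Psi> q)) differentiable (at p)" if p: "p \<in> U" for p
    by (rule differentiable_compose[OF shift_diff[OF sc oV Psi_V[OF p]] Psi_differentiable[OF p]])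
  have d\<omega>: "(\<lambda>q. adjoint (inv (dmap \<Psi> q)) w) differentiable (at p)" if p: "p \<in> U" for p w
  proof -
    have "(\<lambda>q. \<Sum>b\<in>Basis. (w \<bullet> inv (dmap \<Psi> q) b) *\<^sub>R b) differentiable (at p)"
      using inv_dmap_diff[OF p] by (auto intro!: differentiable_sum differentiable_scaleR)
    then show ?thesis
      by (rule diff_transf[OF _ oU p])
         (simp add: adjoint_expand[OF lin_facts(1)[OF dmap_lin dmap_inj]])
  qed
  have part23: "\<forall>t0. (\<forall>p\<in>U. snd p = t0 \<longrightarrow> \<Psi> p = p) \<longrightarrow>
          (\<forall>c. \<forall>p\<in>U. \<forall>args. snd p = t0 \<longrightarrow>
              decomp k kinds (pullback k kinds \<Psi> T) (shift (pullback_metric \<Psi> g)) c p args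
            = decomp k kinds T (shift g) c p args)
        \<and> (\<forall>S. smooth_on U S \<and> (\<forall>p\<in>U. snd (S p) = 0) \<longrightarrow>
          (\<forall>c. \<forall>p\<in>U. \<forall>args. snd p = t0 \<longrightarrow>
              lie k kinds S (decomp k kinds (pullback k kinds \<Psi> T)
                                 (shift (pullback_metric \<Psi> g)) c) p args
            = lie k kinds S (decomp k kinds T (shift g) c) p args))"
  proof (intro allI impI, rule conjI)
    fix t0 assume idt: "\<forall>p\<in>U. snd p = t0 \<longrightarrow> \<Psi> p = p"
    have slD: "dmap \<Psi> p (W, 0) = (W, 0)" if p: "p \<in> U" and t: "snd p = t0" for p W
    proof -
      have "dmap \<Psi> p (W, 0) = psi' p (W, 0)" using dmap_eq[OF p] by simp
      also have "\<dots> = (W, 0)"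
        by (rule slice_deriv[OF oU p Psi_der[OF p] has_derivative_ident]) (use idt t in auto)
      finally show ?thesis .
    qed
    have P2: "decomp k kinds (pullback k kinds \<Psi> T) (shift (pullback_metric \<Psi> g)) c p args
            = decomp k kinds T (shift g) c p args" if p: "p \<in> U" and t: "snd p = t0" for c p args
    proof -
      have pp: "\<Psi> p = p" using idt p t by blast
      note lf = lin_facts[OF dmap_lin[OF p] dmap_inj[OF p]]
      have LU: "\<And>U. inv (dmap \<Psi> p) (U, 0) = (U, 0)" using lf(3) slD[OF p t] by metis
      have "decomp k kinds (pullback k kinds \<Psi> T) (shift (pullback_metric \<Psi> g)) c p args
          = jstar k (pullback k kinds \<Psi> (decomp k kinds T (shift g) c)) p args" by (rule P1[OF p])
      also have "\<dots> = decomp k kinds T (shift g) c p args"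
        unfolding jstar_def pullback_def decomp_def pp
        by (rule arg_cong[where f="T p"], rule ext)
           (simp add: jproj_def PXstar_def slD[OF p t] adj_fix[OF lf(1) LU])
      finally show ?thesis .
    qed
    show "\<forall>c. \<forall>p\<in>U. \<forall>args. snd p = t0 \<longrightarrow>
              decomp k kinds (pullback k kinds \<Psi> T) (shift (pullback_metric \<Psi> g)) c p args
            = decomp k kinds T (shift g) c p args" using P2 by blast
    show "\<forall>S. smooth_on U S \<and> (\<forall>p\<in>U. snd (S p) = 0) \<longrightarrow>
          (\<forall>c. \<forall>p\<in>U. \<forall>args. snd p = t0 \<longrightarrow>
              lie k kinds S (decomp k kinds (pullback k kinds \<Psi> T)
                                 (shift (pullback_metric \<Psi> g)) c) p args
            = lie k kinds S (decomp k kinds T (shift g) c) p args)"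
    proof (intro allI impI ballI)
      fix S :: "'n pt \<Rightarrow> 'n pt" and c p args
      assume S: "smooth_on U S \<and> (\<forall>p\<in>U. snd (S p) = 0)" and p: "p \<in> U" and t: "snd p = t0"
      define Bh where "Bh = decomp k kinds (pullback k kinds \<Psi> T) (shift (pullback_metric \<Psi> g)) c"
      define B where "B = decomp k kinds T (shift g) c"
      have pp: "\<Psi> p = p" using idt p t by blast
      have pV: "p \<in> V" using Psi_V[OF p] pp by simp
      have dB: "(\<lambda>q. B q args) differentiable (at p)"
        unfolding B_def decomp_def
      proof (rule T_diff[OF tf oV differentiable_ident pV])
        fix i assume "i < k"
        then show "(\<lambda>q. (\<lambda>i. if i < k then if kinds i then if c i then (0, 1) - shift g q else jproj (args i)
                 else if c i then (0, 1) else PXstar (shift g q) (args i) else args i) i) differentiable (at p)"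
          using shift_diff[OF sc oV pV]
          by (cases "kinds i"; cases "c i") (auto simp: PXstar_def intro!: differentiable_Pair differentiable_inner differentiable_fst')
      qed
      have dJ: "(\<lambda>q. jstar k (pullback k kinds \<Psi> B) q args) differentiable (at p)"
        unfolding jstar_def pullback_def B_def decomp_def
      proof (rule T_diff[OF tf oV Psi_differentiable[OF p] Psi_V[OF p]])
        fix i assume ik: "i < k"
        show "(\<lambda>q. (\<lambda>i. if i < k then if kinds i then if c i then (0, 1) - shift g (\<Psi> q)
                   else jproj ((\<lambda>i. if i < k then if kinds i then dmap \<Psi> q ((\<lambda>i. if i < k then jproj (args i) else args i) i)
                     else adjoint (inv (dmap \<Psi> q)) ((\<lambda>i. if i < k then jproj (args i) else args i) i)
                    else (\<lambda>i. if i < k then jproj (args i) else args i) i) i)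
                  else if c i then (0, 1)
                   else PXstar (shift g (\<Psi> q)) ((\<lambda>i. if i < k then if kinds i then dmap \<Psi> q ((\<lambda>i. if i < k then jproj (args i) else args i) i)
                     else adjoint (inv (dmap \<Psi> q)) ((\<lambda>i. if i < k then jproj (args i) else args i) i)
                    else (\<lambda>i. if i < k then jproj (args i) else args i) i) i)
                 else (\<lambda>i. if i < k then if kinds i then dmap \<Psi> q ((\<lambda>i. if i < k then jproj (args i) else args i) i)
                     else adjoint (inv (dmap \<Psi> q)) ((\<lambda>i. if i < k then jproj (args i) else args i) i)
                    else (\<lambda>i. if i < k then jproj (args i) else args i) i) i) i) differentiable (at p)"
          using ik dXP[OF p] d\<omega>[OF p] dmap_diff[OF p]
          by (cases "kinds i"; cases "c i") (auto simp: PXstar_def jproj_def intro!: differentiable_Pair differentiable_inner differentiable_fst')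
      qed
      have dBh: "(\<lambda>q. Bh q args) differentiable (at p)"
        by (rule diff_transf[OF dJ oU p]) (simp add: P1 Bh_def B_def)
      obtain FB where FB: "((\<lambda>q. B q args) has_derivative FB) (at p)" using dB differentiable_def by blast
      obtain FBh where FBh: "((\<lambda>q. Bh q args) has_derivative FBh) (at p)" using dBh differentiable_def by blast
      have Sp: "S p = (fst (S p), 0)" using S p by (simp add: prod_eq_iff)
      have "FBh (fst (S p), 0) = FB (fst (S p), 0)"
        by (rule slice_deriv[OF oU p FBh FB]) (use P2 t in \<open>simp add: Bh_def B_def\<close>)
      then have deq: "frechet_derivative (\<lambda>q. Bh q args) (at p) (S p) = frechet_derivative (\<lambda>q. B q args) (at p) (S p)"
        using frechet_derivative_at[OF FB] frechet_derivative_at[OF FBh] Sp by metis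
      have seq: "\<And>a. Bh p a = B p a" using P2[OF p t] Bh_def B_def by simp
      have "lie k kinds S Bh p args = lie k kinds S B p args"
        unfolding lie_def deq seq ..
      then show "lie k kinds S (decomp k kinds (pullback k kinds \<Psi> T) (shift (pullback_metric \<Psi> g)) c) p args
            = lie k kinds S (decomp k kinds T (shift g) c) p args" unfolding Bh_def B_def .
    qed
  qed
  show ?thesis using P1 part23 by blast
qed


end
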